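(* Fix a finite monoid presentation $\langle A\mid R\rangle$ satisfying $C(4)$. There is an algorithm which, given $w\in A^*$ and a piece $p$, decides whether $w$ is $p$-active in constant time, i.e. in time bounded by a constant depending only on the presentation.
   Context: Relation words are the words occurring as a side of a pair in $R$. A piece is a word that is a factor of two distinct relation words, or occurs at two different (possibly overlapping) positions in a single relation word; $\varepsilon$ is a piece. $C(4)$: no relation word is a product of fewer than 4 pieces. For a relation word $u$, $X_u$ is its longest prefix that is a piece, $Z_u$ its longest suffix that is a piece, and $u=X_uY_uZ_u$ defines $Y_u$. A relation prefix of a word is a prefix of the form $aX_uY_u$ with $a\in A^*$ and $u$ a relation word. For a piece $p$, a word $w$ is $p$-active if $pw$ has a relation prefix $aX_uY_u$ with $|a|<|p|$. *)

theory Defs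
  imports Main "HOL-Library.Sublist"
begin

definition relword :: "('a list \<times> 'a list) set \<Rightarrow> 'a list \<Rightarrow> bool" where
  "relword R u \<longleftrightarrow> (\<exists>v. (u, v) \<in> R \<or> (v, u) \<in> R)"

definition piece :: "('a list \<times> 'a list) set \<Rightarrow> 'a list \<Rightarrow> bool" where
  "piece R p \<longleftrightarrow> p = [] \<or>
     (\<exists>u v. relword R u \<and> relword R v \<and> u \<noteq> v \<and> sublist p u \<and> sublist p v) \<or>
     (\<exists>u x y x' y'. relword R u \<and> u = x @ p @ y \<and> u = x' @ p @ y' \<and> length x \<noteq> length x')"

definition C4 :: "('a list \<times> 'a list) set \<Rightarrow> bool" where
  "C4 R \<longleftrightarrow> (\<forall>u. relword R u \<longrightarrow>
      \<not> (\<exists>ps. length ps < 4 \<and> (\<forall>q\<in>set ps. piece R q) \<and> concat ps = u))"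

definition Xw :: "('a list \<times> 'a list) set \<Rightarrow> 'a list \<Rightarrow> 'a list" where
  "Xw R u = take (GREATEST n. n \<le> length u \<and> piece R (take n u)) u"

definition Zw :: "('a list \<times> 'a list) set \<Rightarrow> 'a list \<Rightarrow> 'a list" where
  "Zw R u = drop (length u - (GREATEST n. n \<le> length u \<and> piece R (drop (length u - n) u))) u"

text \<open>Y_u defined by u = X_u Y_u Z_u.\<close>
definition Yw :: "('a list \<times> 'a list) set \<Rightarrow> 'a list \<Rightarrow> 'a list" where
  "Yw R u = drop (length (Xw R u)) (take (length u - length (Zw R u)) u)"

definition p_active :: "('a list \<times> 'a list) set \<Rightarrow> 'a list \<Rightarrow> 'a list \<Rightarrow> bool" where
  "p_active R p w \<longleftrightarrow>
     (\<exists>a u. relword R u \<and> length a < length p \<and> prefix (a @ Xw R u @ Yw R u) (p @ w))"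

end

theory Submission
  imports Defs
begin

lemma XY_len: "length (Xw R u @ Yw R u) \<le> length u"
  unfolding Xw_def Yw_def by auto

lemma prefix_iff_take: "prefix xs ys \<longleftrightarrow> take (length xs) ys = xs"
proof
  assume "prefix xs ys"
  then obtain zs where "ys = xs @ zs" unfolding prefix_def by blast
  then show "take (length xs) ys = xs" by simp
next
  assume "take (length xs) ys = xs"
  then have "ys = xs @ drop (length xs) ys" by (metis append_take_drop_id)
  then show "prefix xs ys" unfolding prefix_def by blast
qed

lemma prefix_take_K:
  assumes "length xs \<le> length p + K"
  shows "prefix xs (p @ w) \<longleftrightarrow> prefix xs (p @ take K w)"
proof -
  have e: "p @ take K w = take (length p + K) (p @ w)" by simp
  have "take (length xs) (take (length p + K) (p @ w)) = take (length xs) (p @ w)"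
    using assms by (simp add: min_def)
  then show ?thesis unfolding e prefix_iff_take by simp
qed

theorem lemma6p16:
  fixes A :: "'a set" and R :: "('a list \<times> 'a list) set"
  assumes "finite A" and "finite R" and "R \<subseteq> lists A \<times> lists A" and "C4 R"
  shows "\<exists>K::nat. \<exists>T :: 'a list \<Rightarrow> 'a list \<Rightarrow> bool.
           \<forall>p w. piece R p \<longrightarrow> w \<in> lists A \<longrightarrow> (p_active R p w \<longleftrightarrow> T p (take K w))"
proof -
  define K where "K = (\<Sum>(x,y)\<in>R. length x + length y)"
  have bound: "length u \<le> K" if ru: "relword R u" for u
  proof -
    obtain v where "(u,v) \<in> R \<or> (v,u) \<in> R" using ru unfolding relword_def by blast
    then show ?thesis
    proof
      assume h: "(u,v) \<in> R"
      have "length u + length v \<le> K" unfolding K_def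
        using member_le_sum[OF h, of "\<lambda>(x,y). length x + length y"] assms(2) by auto
      then show ?thesis by simp
    next
      assume h: "(v,u) \<in> R"
      have "length v + length u \<le> K" unfolding K_def
        using member_le_sum[OF h, of "\<lambda>(x,y). length x + length y"] assms(2) by auto
      then show ?thesis by simp
    qed
  qed
  have "p_active R p w \<longleftrightarrow> p_active R p (take K w)" for p w
  proof -
    have "prefix (a @ Xw R u @ Yw R u) (p @ w) \<longleftrightarrow> prefix (a @ Xw R u @ Yw R u) (p @ take K w)"
      if "relword R u" "length a < length p" for a u
    proof (rule prefix_take_K)
      show "length (a @ Xw R u @ Yw R u) \<le> length p + K"
        using XY_len[of R u] bound[OF that(1)] that(2) by simp
    qed
    then show ?thesis unfolding p_active_def by blast
  qed
  then show ?thesis by blast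
qed

end
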